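(* Let $R=\mathbb{R}[t_1,\dots,t_n]$, let $k\ge 0$, and let $R_{\le k}\subset R$ be the $\mathbb{R}$-vector space of polynomials of total degree $\le k$. For every $\mathbb{R}$-linear map $A:R_{\le k}\to R$ there exists a differential operator $D\in\mathrm{Diff}^k(R)$ whose restriction $D|_{R_{\le k}}:R_{\le k}\to R$ equals $A$.
   Context: For a commutative algebra $R$ over a field $\Bbbk$, for $a\in R$ let $m_a:R\to R$, $b\mapsto ab$. The differential operators of order $0$ are the $R$-module endomorphisms of $R$, i.e. $\mathrm{Diff}^0(R)=\{m_a: a\in R\}$. Inductively, for $i\ge 1$, a $\Bbbk$-linear map $D:R\to R$ is a differential operator of order $i$, written $D\in\mathrm{Diff}^i(R)$, if for every $D^0\in \mathrm{Diff}^0(R)$ the commutator $[D,D^0]=D\circ D^0-D^0\circ D$ lies in $\mathrm{Diff}^{i-1}(R)$. Here $R=\mathbb{R}[t_1,\dots,t_n]$ is regarded as an $\mathbb{R}$-algebra. *)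

theory Defs
  imports Complex_Main "HOL-Library.Poly_Mapping"
begin

text \<open>Polynomials over the reals: finitely supported maps from monomials
(exponent vectors, finitely supported maps nat to nat) to real coefficients,
with the library's convolution product.  The ring R[t_1,...,t_n] is the
carrier set of polynomials whose monomials only involve variables 0..n-1.\<close>

type_synonym rpoly = "(nat \<Rightarrow>\<^sub>0 nat) \<Rightarrow>\<^sub>0 real"

definition polyR :: "nat \<Rightarrow> rpoly set" where
  "polyR n = {p. \<forall>m \<in> Poly_Mapping.keys p. \<forall>i \<in> Poly_Mapping.keys m. i < n}"

definition const_poly :: "real \<Rightarrow> rpoly" where
  "const_poly c = Poly_Mapping.single 0 c"

definition mdeg :: "(nat \<Rightarrow>\<^sub>0 nat) \<Rightarrow> nat" where
  "mdeg m = (\<Sum>i\<in>Poly_Mapping.keys m. Poly_Mapping.lookup m i)"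

definition polyR_le :: "nat \<Rightarrow> nat \<Rightarrow> rpoly set" where
  "polyR_le n k = {p \<in> polyR n. \<forall>m \<in> Poly_Mapping.keys p. mdeg m \<le> k}"

definition real_linear_on :: "rpoly set \<Rightarrow> (rpoly \<Rightarrow> rpoly) \<Rightarrow> bool" where
  "real_linear_on S D \<longleftrightarrow>
     (\<forall>p\<in>S. \<forall>q\<in>S. D (p + q) = D p + D q) \<and>
     (\<forall>c. \<forall>p\<in>S. D (const_poly c * p) = const_poly c * D p)"

text \<open>Differential operators of order i on R = polyR n (Grothendieck's inductive
definition); only the values of D on R matter.\<close>
fun is_diff :: "nat \<Rightarrow> nat \<Rightarrow> (rpoly \<Rightarrow> rpoly) \<Rightarrow> bool" where
  "is_diff n 0 D = (\<exists>a\<in>polyR n. \<forall>b\<in>polyR n. D b = a * b)"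
| "is_diff n (Suc i) D =
     ((\<forall>p\<in>polyR n. D p \<in> polyR n) \<and> real_linear_on (polyR n) D \<and>
      (\<forall>a\<in>polyR n. is_diff n i (\<lambda>b. D (a * b) - a * D b)))"

end

theory Submission
  imports Defs "HOL-Library.FuncSet"
begin


abbreviation ev :: "nat \<Rightarrow> (nat \<Rightarrow>\<^sub>0 nat)" where "ev i \<equiv> Poly_Mapping.single i 1"

lemma lookup_const_mult: "Poly_Mapping.lookup (const_poly c * p) m = c * Poly_Mapping.lookup p m"
  unfolding const_poly_def
  by (simp flip: mult_map_scale_conv_mult add: Poly_Mapping.map.rep_eq when_def)

lemma poly_expand: "(p::rpoly) = (\<Sum>m\<in>Poly_Mapping.keys p. Poly_Mapping.single m (Poly_Mapping.lookup p m))"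
proof (rule poly_mapping_eqI)
  fix k
  show "Poly_Mapping.lookup p k = Poly_Mapping.lookup (\<Sum>m\<in>Poly_Mapping.keys p. Poly_Mapping.single m (Poly_Mapping.lookup p m)) k"
    by (simp add: lookup_sum lookup_single when_def in_keys_iff)
qed

lemma poly_induct:
  assumes "P 0" "\<And>m c. P (Poly_Mapping.single m c)" "\<And>p q. P p \<Longrightarrow> P q \<Longrightarrow> P (p + q)"
  shows "P (p::rpoly)"
proof -
  have "P (\<Sum>m\<in>S. Poly_Mapping.single m (Poly_Mapping.lookup p m))" if "finite S" for S
    using that by (induction S rule: finite_induct) (auto intro: assms)
  then show ?thesis using poly_expand[of p] by (metis finite_keys)
qed

definition pd :: "nat \<Rightarrow> rpoly \<Rightarrow> rpoly" where
  "pd i p = Abs_poly_mapping (\<lambda>m. real (Poly_Mapping.lookup m i + 1) * Poly_Mapping.lookup p (m + ev i))"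

lemma lookup_pd: "Poly_Mapping.lookup (pd i p) m = real (Poly_Mapping.lookup m i + 1) * Poly_Mapping.lookup p (m + ev i)"
proof -
  have "finite ((\<lambda>m. m + ev i) -` {m. Poly_Mapping.lookup p m \<noteq> 0})"
    by (rule finite_vimageI) (auto simp: inj_def)
  then have "finite {m. real (Poly_Mapping.lookup m i + 1) * Poly_Mapping.lookup p (m + ev i) \<noteq> 0}"
    by (rule rev_finite_subset) auto
  then show ?thesis unfolding pd_def by simp
qed

lemma pd_add: "pd i (p + q) = pd i p + pd i q"
  by (rule poly_mapping_eqI) (simp add: lookup_pd lookup_add algebra_simps)

lemma pd_diff: "pd i (p - q) = pd i p - pd i q"
  by (rule poly_mapping_eqI) (simp add: lookup_pd lookup_minus algebra_simps)

lemma pd_zero: "pd i 0 = 0"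
  by (rule poly_mapping_eqI) (simp add: lookup_pd)

lemma pd_const_mult: "pd i (const_poly c * p) = const_poly c * pd i p"
  by (rule poly_mapping_eqI) (simp add: lookup_pd lookup_const_mult)

lemma minus_ev_add:
  assumes "Poly_Mapping.lookup a i > 0"
  shows "a - ev i + b = a + b - ev i"
  by (rule poly_mapping_eqI) (use assms in \<open>auto simp: lookup_add lookup_minus lookup_single when_def\<close>)

lemma pd_single: "pd i (Poly_Mapping.single a u) = Poly_Mapping.single (a - ev i) (u * real (Poly_Mapping.lookup a i))"
proof (rule poly_mapping_eqI)
  fix m
  show "Poly_Mapping.lookup (pd i (Poly_Mapping.single a u)) m = Poly_Mapping.lookup (Poly_Mapping.single (a - ev i) (u * real (Poly_Mapping.lookup a i))) m"
  proof (cases "a = m + ev i")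
    case True
    then have "a - ev i = m" by simp
    moreover have "Poly_Mapping.lookup a i = Poly_Mapping.lookup m i + 1" using True by (simp add: lookup_add)
    ultimately show ?thesis using True by (simp add: lookup_pd lookup_single)
  next
    case False
    have "u * real (Poly_Mapping.lookup a i) = 0" if "a - ev i = m"
    proof (rule ccontr)
      assume "u * real (Poly_Mapping.lookup a i) \<noteq> 0"
      then have "Poly_Mapping.lookup a i > 0" by auto
      then have "a = m + ev i" using that
        by (metis add.commute minus_ev_add add_diff_cancel_left')
      with False show False by simp
    qed
    then show ?thesis using False by (auto simp: lookup_pd lookup_single when_def)
  qed
qed

lemma leibniz_single:
  "pd i (Poly_Mapping.single a u * Poly_Mapping.single b v) =
     pd i (Poly_Mapping.single a u) * Poly_Mapping.single b v + Poly_Mapping.single a u * pd i (Poly_Mapping.single b v)"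
proof -
  have L: "pd i (Poly_Mapping.single a u * Poly_Mapping.single b v) = Poly_Mapping.single (a + b - ev i) (u * v * real (Poly_Mapping.lookup a i + Poly_Mapping.lookup b i))"
    by (simp add: mult_single pd_single lookup_add)
  have R1: "pd i (Poly_Mapping.single a u) * Poly_Mapping.single b v = Poly_Mapping.single (a + b - ev i) (u * v * real (Poly_Mapping.lookup a i))"
  proof (cases "Poly_Mapping.lookup a i > 0")
    case True
    have eq: "a - ev i + b = a + b - ev i" using True by (rule minus_ev_add)
    show ?thesis unfolding pd_single mult_single eq by (simp add: mult_ac)
  next
    case False then show ?thesis by (simp add: pd_single mult_single)
  qed
  have R2: "Poly_Mapping.single a u * pd i (Poly_Mapping.single b v) = Poly_Mapping.single (a + b - ev i) (u * v * real (Poly_Mapping.lookup b i))"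
  proof (cases "Poly_Mapping.lookup b i > 0")
    case True
    have eq: "b - ev i + a = b + a - ev i" using True by (rule minus_ev_add)
    have eq2: "a + (b - ev i) = a + b - ev i" using eq by (simp add: add.commute)
    show ?thesis unfolding pd_single mult_single eq2 by (simp add: mult_ac)
  next
    case False then show ?thesis by (simp add: pd_single mult_single)
  qed
  show ?thesis unfolding L R1 R2 by (simp add: single_add[symmetric] algebra_simps)
qed

lemma leibniz: "pd i (p * q) = pd i p * q + p * pd i q"
proof (induction p rule: poly_induct)
  case 1 then show ?case by (simp add: pd_zero)
next
  case (2 a u)
  show ?case
  proof (induction q rule: poly_induct)
    case 1 then show ?case by (simp add: pd_zero)
  next
    case (2 b v) then show ?case by (rule leibniz_single)
  next
    case (3 q1 q2) then show ?case by (simp add: distrib_left pd_add algebra_simps)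
  qed
next
  case (3 p1 p2) then show ?case by (simp add: distrib_right pd_add algebra_simps)
qed



lemma polyR_add: "p \<in> polyR n \<Longrightarrow> q \<in> polyR n \<Longrightarrow> p + q \<in> polyR n"
  using keys_add[of p q] unfolding polyR_def by blast

lemma polyR_diff: "p \<in> polyR n \<Longrightarrow> q \<in> polyR n \<Longrightarrow> p - q \<in> polyR n"
  using keys_diff[of p q] unfolding polyR_def by blast

lemma polyR_mult:
  assumes p: "p \<in> polyR n" and q: "q \<in> polyR n" shows "p * q \<in> polyR n"
  unfolding polyR_def mem_Collect_eq
proof (intro ballI)
  fix m i
  assume m: "m \<in> Poly_Mapping.keys (p * q)" and i: "i \<in> Poly_Mapping.keys m"
  from m keys_mult[of p q] obtain a b where ab: "m = a + b" "a \<in> Poly_Mapping.keys p" "b \<in> Poly_Mapping.keys q" by blast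
  from i ab(1) keys_add[of a b] have "i \<in> Poly_Mapping.keys a \<or> i \<in> Poly_Mapping.keys b" by blast
  then show "i < n" using ab p q unfolding polyR_def by blast
qed

lemma polyR_single: "(\<forall>i\<in>Poly_Mapping.keys m. i < n) \<Longrightarrow> Poly_Mapping.single m c \<in> polyR n"
  unfolding polyR_def by auto

lemma polyR_const: "const_poly c \<in> polyR n"
  unfolding const_poly_def by (rule polyR_single) simp

lemma polyR_zero: "0 \<in> polyR n"
  unfolding polyR_def by simp

lemma polyR_one: "1 \<in> polyR n"
  unfolding polyR_def by simp

lemma polyR_sum: "(\<And>x. x \<in> S \<Longrightarrow> f x \<in> polyR n) \<Longrightarrow> sum f S \<in> polyR n"
  by (induction S rule: infinite_finite_induct) (auto intro: polyR_add polyR_zero)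

lemma polyR_pd:
  assumes "p \<in> polyR n" shows "pd i p \<in> polyR n"
  unfolding polyR_def mem_Collect_eq
proof (intro ballI)
  fix m j
  assume m: "m \<in> Poly_Mapping.keys (pd i p)" and j: "j \<in> Poly_Mapping.keys m"
  from m have "m + ev i \<in> Poly_Mapping.keys p" by (simp add: in_keys_iff lookup_pd)
  moreover from j have "j \<in> Poly_Mapping.keys (m + ev i)" by (simp add: in_keys_iff lookup_add)
  ultimately show "j < n" using assms unfolding polyR_def by blast
qed

lemma const_mult_comm: "const_poly c * (a * p) = a * (const_poly c * p)"
  by (simp add: mult_ac)

lemma is_diff_cong:
  assumes "is_diff n i D" "\<And>p. p \<in> polyR n \<Longrightarrow> D p = E p"
  shows "is_diff n i E"
  using assms
proof (induction i arbitrary: D E)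
  case 0 then show ?case by auto
next
  case (Suc i)
  have lin: "real_linear_on (polyR n) D" using Suc.prems by simp
  have "real_linear_on (polyR n) E"
    using lin Suc.prems(2) unfolding real_linear_on_def
    by (simp add: polyR_add polyR_mult polyR_const)
  moreover have "\<forall>p\<in>polyR n. E p \<in> polyR n" using Suc.prems by auto
  moreover have "is_diff n i (\<lambda>b. E (a * b) - a * E b)" if a: "a \<in> polyR n" for a
  proof -
    have "is_diff n i (\<lambda>b. D (a * b) - a * D b)" using Suc.prems(1) a by simp
    then show ?thesis
      by (rule Suc.IH) (simp add: Suc.prems(2) polyR_mult a)
  qed
  ultimately show ?case by simp
qed

lemma is_diff_lincomb:
  assumes "is_diff n i D" "is_diff n i E" "a \<in> polyR n" "b \<in> polyR n"
  shows "is_diff n i (\<lambda>p. a * D p + b * E p)"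
  using assms
proof (induction i arbitrary: D E)
  case 0
  then obtain d e where d: "d \<in> polyR n" "\<forall>x\<in>polyR n. D x = d * x"
    and e: "e \<in> polyR n" "\<forall>x\<in>polyR n. E x = e * x" by auto
  have "a * d + b * e \<in> polyR n" using d e 0 by (simp add: polyR_add polyR_mult)
  moreover have "\<forall>x\<in>polyR n. a * D x + b * E x = (a * d + b * e) * x"
    using d e by (simp add: algebra_simps)
  ultimately show ?case by auto
next
  case (Suc i)
  have lD: "real_linear_on (polyR n) D" and lE: "real_linear_on (polyR n) E" using Suc.prems by simp_all
  have "real_linear_on (polyR n) (\<lambda>p. a * D p + b * E p)"
    using lD lE unfolding real_linear_on_def by (simp add: algebra_simps)
  moreover have "\<forall>p\<in>polyR n. a * D p + b * E p \<in> polyR n"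
    using Suc.prems by (simp add: polyR_add polyR_mult)
  moreover have "is_diff n i (\<lambda>y. (a * D (x * y) + b * E (x * y)) - x * (a * D y + b * E y))"
    if x: "x \<in> polyR n" for x
  proof -
    have "is_diff n i (\<lambda>y. a * (D (x * y) - x * D y) + b * (E (x * y) - x * E y))"
      using Suc.prems x by (intro Suc.IH) auto
    then show ?thesis by (rule is_diff_cong) (simp add: algebra_simps)
  qed
  ultimately show ?case by simp
qed

lemma is_diff_zero: "is_diff n i (\<lambda>_. 0)"
proof (induction i)
  case 0 then show ?case using polyR_zero by force
next
  case (Suc i)
  then show ?case by (simp add: real_linear_on_def polyR_zero)
qed

lemma is_diff_add: "is_diff n i D \<Longrightarrow> is_diff n i E \<Longrightarrow> is_diff n i (\<lambda>p. D p + E p)"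
  using is_diff_lincomb[of n i D E 1 1] polyR_one by simp

lemma is_diff_diff: "is_diff n i D \<Longrightarrow> is_diff n i E \<Longrightarrow> is_diff n i (\<lambda>p. D p - E p)"
  using is_diff_lincomb[of n i D E 1 "-1"] polyR_one polyR_diff[OF polyR_zero polyR_one] by simp

lemma is_diff_scale: "is_diff n i D \<Longrightarrow> a \<in> polyR n \<Longrightarrow> is_diff n i (\<lambda>p. a * D p)"
  using is_diff_lincomb[of n i D D a 0] polyR_zero by simp

lemma is_diff_sum:
  "finite S \<Longrightarrow> (\<And>x. x \<in> S \<Longrightarrow> is_diff n i (F x)) \<Longrightarrow> is_diff n i (\<lambda>p. \<Sum>x\<in>S. F x p)"
  by (induction S rule: finite_induct) (auto intro: is_diff_add is_diff_zero)

lemma is_diff_maps: "is_diff n i D \<Longrightarrow> p \<in> polyR n \<Longrightarrow> D p \<in> polyR n"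
  by (cases i) (auto intro: polyR_mult)

lemma is_diff_mono_Suc: "is_diff n i D \<Longrightarrow> is_diff n (Suc i) D"
proof (induction i arbitrary: D)
  case 0
  then obtain d where d: "d \<in> polyR n" "\<forall>x\<in>polyR n. D x = d * x" by auto
  have "real_linear_on (polyR n) D" using d
    unfolding real_linear_on_def by (simp add: polyR_add polyR_const polyR_mult algebra_simps)
  moreover have "is_diff n 0 (\<lambda>b. D (a * b) - a * D b)" if "a \<in> polyR n" for a
  proof -
    have "\<forall>b\<in>polyR n. D (a * b) - a * D b = 0 * b" using d that by (simp add: polyR_mult)
    then show ?thesis using polyR_zero by auto
  qed
  ultimately show ?case using d by (simp add: polyR_mult)
next
  case (Suc i)
  from Suc.prems have A: "\<forall>p\<in>polyR n. D p \<in> polyR n" "real_linear_on (polyR n) D"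
    "\<forall>a\<in>polyR n. is_diff n i (\<lambda>b. D (a * b) - a * D b)" by simp_all
  have "\<forall>a\<in>polyR n. is_diff n (Suc i) (\<lambda>b. D (a * b) - a * D b)" using A(3) Suc.IH by blast
  then show ?case by (subst is_diff.simps(2)) (use A in blast)
qed

lemma is_diff_mono: "is_diff n i D \<Longrightarrow> i \<le> j \<Longrightarrow> is_diff n j D"
proof (induction j)
  case 0 then show ?case by simp
next
  case (Suc j)
  show ?case
  proof (cases "i \<le> j")
    case True then show ?thesis using Suc is_diff_mono_Suc by blast
  next
    case False
    then have "i = Suc j" using Suc.prems by simp
    then show ?thesis using Suc.prems by (simp del: is_diff.simps)
  qed
qed

lemma is_diff_pd_comp:
  assumes "is_diff n j E"
  shows "is_diff n (Suc j) (\<lambda>p. pd i (E p))"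
  using assms
proof (induction j arbitrary: E)
  case 0
  then obtain e where e: "e \<in> polyR n" "\<forall>x\<in>polyR n. E x = e * x" by auto
  have "real_linear_on (polyR n) (\<lambda>p. pd i (E p))"
    unfolding real_linear_on_def
  proof (intro conjI ballI allI)
    fix p q assume "p \<in> polyR n" "q \<in> polyR n"
    then show "pd i (E (p + q)) = pd i (E p) + pd i (E q)"
      using e by (simp add: polyR_add distrib_left pd_add)
  next
    fix c p assume p: "p \<in> polyR n"
    have "E (const_poly c * p) = const_poly c * (e * p)"
      using e p by (simp add: polyR_const polyR_mult mult_ac)
    then show "pd i (E (const_poly c * p)) = const_poly c * pd i (E p)"
      using e p by (simp add: pd_const_mult)
  qed
  moreover have "is_diff n 0 (\<lambda>b. pd i (E (a * b)) - a * pd i (E b))" if a: "a \<in> polyR n" for a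
  proof -
    have "\<forall>b\<in>polyR n. pd i (E (a * b)) - a * pd i (E b) = (pd i a * e) * b"
    proof
      fix b assume b: "b \<in> polyR n"
      have "E (a * b) = a * (e * b)" using e a b by (simp add: polyR_mult mult_ac)
      moreover have "E b = e * b" using e b by (simp add: mult_ac)
      moreover have "pd i (a * (e * b)) = pd i a * (e * b) + a * pd i (e * b)" by (rule leibniz)
      ultimately show "pd i (E (a * b)) - a * pd i (E b) = (pd i a * e) * b" by (simp add: mult_ac)
    qed
    moreover have "pd i a * e \<in> polyR n" using a e by (simp add: polyR_mult polyR_pd)
    ultimately show ?thesis by auto
  qed
  ultimately show ?case using e by (simp add: polyR_mult polyR_pd)
next
  case (Suc j)
  have lin: "real_linear_on (polyR n) E" and mp: "\<forall>p\<in>polyR n. E p \<in> polyR n" using Suc.prems by auto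
  have "real_linear_on (polyR n) (\<lambda>p. pd i (E p))" using lin mp
    unfolding real_linear_on_def by (simp add: pd_add pd_const_mult)
  moreover have "is_diff n (Suc j) (\<lambda>b. pd i (E (a * b)) - a * pd i (E b))" if a: "a \<in> polyR n" for a
  proof -
    have c: "is_diff n j (\<lambda>b. E (a * b) - a * E b)" using Suc.prems a by simp
    have 1: "is_diff n (Suc j) (\<lambda>b. pd i (E (a * b) - a * E b))" using Suc.IH[OF c] .
    have 2: "is_diff n (Suc j) (\<lambda>b. pd i a * E b)"
      using Suc.prems a by (intro is_diff_scale) (auto intro: polyR_pd)
    have "is_diff n (Suc j) (\<lambda>b. pd i (E (a * b) - a * E b) + pd i a * E b)"
      using is_diff_add[OF 1 2] .
    then show ?thesis
      by (rule is_diff_cong) (simp add: pd_diff leibniz)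
  qed
  ultimately show ?case using mp by (simp add: polyR_pd)
qed



fun Dl :: "nat list \<Rightarrow> rpoly \<Rightarrow> rpoly" where
  "Dl [] p = p"
| "Dl (i # L) p = pd i (Dl L p)"

fun al :: "nat list \<Rightarrow> (nat \<Rightarrow>\<^sub>0 nat)" where
  "al [] = 0"
| "al (i # L) = al L + ev i"

fun cl :: "nat list \<Rightarrow> (nat \<Rightarrow>\<^sub>0 nat) \<Rightarrow> real" where
  "cl [] g = 1"
| "cl (i # L) g = cl L g * real (Poly_Mapping.lookup (g - al L) i)"

lemma is_diff_Dl: "is_diff n (length L) (Dl L)"
proof (induction L)
  case Nil
  have "\<forall>b\<in>polyR n. Dl [] b = 1 * b" by simp
  then show ?case using polyR_one by (auto simp del: Dl.simps)
next
  case (Cons i L)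
  then show ?case using is_diff_pd_comp[of n "length L" "Dl L" i] by simp
qed

lemma Dl_single: "Dl L (Poly_Mapping.single g u) = Poly_Mapping.single (g - al L) (u * cl L g)"
  by (induction L) (simp_all add: pd_single diff_diff_add mult_ac)

lemma cl_nz: "cl L g \<noteq> 0 \<longleftrightarrow> (\<forall>j. Poly_Mapping.lookup (al L) j \<le> Poly_Mapping.lookup g j)"
proof (induction L)
  case Nil then show ?case by simp
next
  case (Cons i L)
  have "cl (i # L) g \<noteq> 0 \<longleftrightarrow> cl L g \<noteq> 0 \<and> Poly_Mapping.lookup (al L) i < Poly_Mapping.lookup g i"
    by (simp add: lookup_minus not_le)
  also have "\<dots> \<longleftrightarrow> (\<forall>j. Poly_Mapping.lookup (al (i # L)) j \<le> Poly_Mapping.lookup g j)"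
    unfolding Cons.IH
  proof
    assume A: "(\<forall>j. Poly_Mapping.lookup (al L) j \<le> Poly_Mapping.lookup g j) \<and> Poly_Mapping.lookup (al L) i < Poly_Mapping.lookup g i"
    show "\<forall>j. Poly_Mapping.lookup (al (i # L)) j \<le> Poly_Mapping.lookup g j"
    proof
      fix j show "Poly_Mapping.lookup (al (i # L)) j \<le> Poly_Mapping.lookup g j"
        using A by (cases "i = j") (auto simp: lookup_add lookup_single)
    qed
  next
    assume B: "\<forall>j. Poly_Mapping.lookup (al (i # L)) j \<le> Poly_Mapping.lookup g j"
    have "Poly_Mapping.lookup (al L) j \<le> Poly_Mapping.lookup g j" for j
      using B[rule_format, of j] by (simp add: lookup_add)
    moreover have "Poly_Mapping.lookup (al L) i < Poly_Mapping.lookup g i"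
      using B[rule_format, of i] by (simp add: lookup_add)
    ultimately show "(\<forall>j. Poly_Mapping.lookup (al L) j \<le> Poly_Mapping.lookup g j) \<and> Poly_Mapping.lookup (al L) i < Poly_Mapping.lookup g i"
      by blast
  qed
  finally show ?case .
qed

lemma mdeg_sum: "finite S \<Longrightarrow> Poly_Mapping.keys m \<subseteq> S \<Longrightarrow> mdeg m = (\<Sum>i\<in>S. Poly_Mapping.lookup m i)"
  unfolding mdeg_def by (rule sum.mono_neutral_left) (auto simp: in_keys_iff)

lemma mdeg_add: "mdeg (a + b) = mdeg a + mdeg b"
proof -
  let ?S = "Poly_Mapping.keys a \<union> Poly_Mapping.keys b"
  have "mdeg (a + b) = (\<Sum>i\<in>?S. Poly_Mapping.lookup (a + b) i)"
    using keys_add[of a b] by (intro mdeg_sum) auto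
  also have "\<dots> = (\<Sum>i\<in>?S. Poly_Mapping.lookup a i) + (\<Sum>i\<in>?S. Poly_Mapping.lookup b i)"
    by (simp add: lookup_add sum.distrib)
  also have "\<dots> = mdeg a + mdeg b"
    by (simp add: mdeg_sum[symmetric])
  finally show ?thesis .
qed

lemma mdeg_ev: "mdeg (ev i) = 1"
  unfolding mdeg_def by simp

lemma mdeg_ev': "mdeg (Poly_Mapping.single i (Suc 0)) = 1"
  unfolding mdeg_def by simp

lemma mdeg_zero: "mdeg 0 = 0"
  unfolding mdeg_def by simp

lemma mdeg_al: "mdeg (al L) = length L"
  by (induction L) (simp_all add: mdeg_add mdeg_ev' mdeg_zero)

lemma mdeg_eq_0: "mdeg m = 0 \<Longrightarrow> m = 0"
  unfolding mdeg_def
  by (metis finite_keys keys_eq_empty lookup_not_eq_zero_eq_in_keys sum_eq_0_iff all_not_in_conv)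

lemma lookup_le_mdeg: "Poly_Mapping.lookup m i \<le> mdeg m"
proof (cases "i \<in> Poly_Mapping.keys m")
  case True then show ?thesis unfolding mdeg_def by (intro member_le_sum) auto
next
  case False then show ?thesis by (simp add: in_keys_iff)
qed

lemma le_mdeg_eq:
  assumes "\<forall>j. Poly_Mapping.lookup a j \<le> Poly_Mapping.lookup g j" "mdeg g \<le> mdeg a"
  shows "g = a"
proof -
  have g: "g = a + (g - a)"
    by (rule poly_mapping_eqI) (use assms(1) in \<open>simp add: lookup_add lookup_minus\<close>)
  then have "mdeg g = mdeg a + mdeg (g - a)" by (metis mdeg_add)
  then have "g - a = 0" using assms(2) mdeg_eq_0 by simp
  then show ?thesis using g by simp
qed

lemma exists_al: "\<exists>L. al L = b"
proof (induction "mdeg b" arbitrary: b rule: less_induct)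
  case less
  show ?case
  proof (cases "b = 0")
    case True then show ?thesis by (metis al.simps(1))
  next
    case False
    then obtain i where i: "i \<in> Poly_Mapping.keys b" by (metis keys_eq_empty all_not_in_conv)
    define b' where "b' = b - ev i"
    have bb: "b = b' + ev i"
      by (rule poly_mapping_eqI) (use i in \<open>auto simp: b'_def lookup_add lookup_minus lookup_single when_def in_keys_iff\<close>)
    then have "mdeg b' < mdeg b" by (metis mdeg_add mdeg_ev less_add_one)
    then obtain L where "al L = b'" using less by blast
    then have "al (i # L) = b" using bb by simp
    then show ?thesis by blast
  qed
qed



definition MS :: "nat \<Rightarrow> nat \<Rightarrow> (nat \<Rightarrow>\<^sub>0 nat) set" where
  "MS n k = {g. (\<forall>i\<in>Poly_Mapping.keys g. i < n) \<and> mdeg g \<le> k}"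

lemma finite_MS: "finite (MS n k)"
proof -
  let ?h = "\<lambda>g::nat \<Rightarrow>\<^sub>0 nat. (\<lambda>i. if i < n then Poly_Mapping.lookup g i else undefined)"
  have inj: "inj_on ?h (MS n k)"
  proof (rule inj_onI)
    fix g g' assume g: "g \<in> MS n k" and g': "g' \<in> MS n k" and eq: "?h g = ?h g'"
    show "g = g'"
    proof (rule poly_mapping_eqI)
      fix i show "Poly_Mapping.lookup g i = Poly_Mapping.lookup g' i"
      proof (cases "i < n")
        case True
        show ?thesis using True fun_cong[OF eq, of i] by simp
      next
        case False
        then have "i \<notin> Poly_Mapping.keys g" "i \<notin> Poly_Mapping.keys g'" using g g' unfolding MS_def by auto
        then show ?thesis by (simp add: in_keys_iff)
      qed
    qed
  qed
  have "?h ` MS n k \<subseteq> PiE {..<n} (\<lambda>_. {..k})"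
  proof
    fix x assume "x \<in> ?h ` MS n k"
    then obtain g where g: "g \<in> MS n k" and x: "x = ?h g" by blast
    have "Poly_Mapping.lookup g i \<le> k" for i using g lookup_le_mdeg[of g i] unfolding MS_def by simp
    then show "x \<in> PiE {..<n} (\<lambda>_. {..k})" unfolding x by (auto simp: PiE_iff extensional_def)
  qed
  then have "finite (?h ` MS n k)" by (rule finite_subset) (simp add: finite_PiE)
  then show ?thesis using finite_imageD inj by blast
qed

lemma single_polyR: "g \<in> MS n k \<Longrightarrow> Poly_Mapping.single g c \<in> polyR n"
  unfolding MS_def by (intro polyR_single) auto

lemma const_mult_const: "const_poly a * const_poly b = const_poly (a * b)"
  unfolding const_poly_def by (simp add: mult_single)

lemma tri:
  assumes "\<beta> \<in> MS n k" "q \<in> polyR n"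
  shows "\<exists>D. is_diff n k D \<and> (\<forall>g\<in>MS n k. D (Poly_Mapping.single g 1) = (if g = \<beta> then q else 0))"
  using assms
proof (induction "k - mdeg \<beta>" arbitrary: \<beta> q rule: less_induct)
  case less
  obtain L where L: "al L = \<beta>" using exists_al by blast
  define c where "c = cl L \<beta>"
  have c: "c \<noteq> 0" unfolding c_def using L by (simp add: cl_nz)
  have lenL: "length L \<le> k" using L less.prems mdeg_al unfolding MS_def by force
  define G where "G = {g \<in> MS n k. mdeg \<beta> < mdeg g}"
  define q0 where "q0 = const_poly (1 / c) * q"
  have q0: "q0 \<in> polyR n" unfolding q0_def using less.prems by (simp add: polyR_mult polyR_const)
  define r where "r g = q0 * Dl L (Poly_Mapping.single g 1)" for g
  have r: "r g \<in> polyR n" if "g \<in> MS n k" for g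
    unfolding r_def using q0 is_diff_maps[OF is_diff_Dl single_polyR[OF that]] by (simp add: polyR_mult)
  have ex: "\<exists>E. is_diff n k E \<and> (\<forall>h\<in>MS n k. E (Poly_Mapping.single h 1) = (if h = g then r g else 0))"
    if g: "g \<in> G" for g
  proof -
    have "k - mdeg g < k - mdeg \<beta>" "g \<in> MS n k" using g unfolding G_def MS_def by auto
    then show ?thesis using less.hyps r by blast
  qed
  define E where "E g = (SOME E. is_diff n k E \<and> (\<forall>h\<in>MS n k. E (Poly_Mapping.single h 1) = (if h = g then r g else 0)))" for g
  have E: "is_diff n k (E g) \<and> (\<forall>h\<in>MS n k. E g (Poly_Mapping.single h 1) = (if h = g then r g else 0))"
    if "g \<in> G" for g
    unfolding E_def
    by (rule someI_ex[of "\<lambda>E. is_diff n k E \<and> (\<forall>h\<in>MS n k. E (Poly_Mapping.single h 1) = (if h = g then r g else 0))"])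
       (rule ex[OF that])
  define D where "D p = q0 * Dl L p - (\<Sum>g\<in>G. E g p)" for p
  have finG: "finite G" unfolding G_def using finite_MS by simp
  have "is_diff n k D"
    unfolding D_def
    by (intro is_diff_diff is_diff_scale is_diff_sum finG q0 is_diff_mono[OF is_diff_Dl lenL]) (use E in blast)
  moreover have "D (Poly_Mapping.single h 1) = (if h = \<beta> then q else 0)" if h: "h \<in> MS n k" for h
  proof -
    have "(\<Sum>g\<in>G. E g (Poly_Mapping.single h 1)) = (\<Sum>g\<in>G. if h = g then r g else 0)"
      using E h by (intro sum.cong) auto
    also have "\<dots> = (if h \<in> G then r h else 0)" using finG by simp
    finally have S: "(\<Sum>g\<in>G. E g (Poly_Mapping.single h 1)) = (if h \<in> G then r h else 0)" .
    show ?thesis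
    proof (cases "h \<in> G")
      case True
      then have "h \<noteq> \<beta>" unfolding G_def by auto
      then show ?thesis using True S unfolding D_def r_def by simp
    next
      case False
      then have le: "mdeg h \<le> mdeg \<beta>" using h unfolding G_def by auto
      show ?thesis
      proof (cases "h = \<beta>")
        case True
        have "Dl L (Poly_Mapping.single h 1) = const_poly c"
          using True L by (simp add: Dl_single c_def const_poly_def)
        have "q0 * const_poly c = q * (const_poly (1 / c) * const_poly c)"
          unfolding q0_def by (simp add: mult_ac)
        also have "\<dots> = q" using c by (simp only: const_mult_const) (simp add: const_poly_def)
        finally have "q0 * const_poly c = q" .
        then show ?thesis using False S True \<open>Dl L (Poly_Mapping.single h 1) = const_poly c\<close>
          unfolding D_def by simp
      next
        case hb: False
        have "cl L h = 0"
        proof (rule ccontr)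
          assume "cl L h \<noteq> 0"
          then have "\<forall>j. Poly_Mapping.lookup (al L) j \<le> Poly_Mapping.lookup h j" by (simp add: cl_nz)
          then have "h = al L" using le L by (intro le_mdeg_eq) auto
          with hb L show False by simp
        qed
        then have "Dl L (Poly_Mapping.single h 1) = 0" by (simp add: Dl_single)
        then show ?thesis using False S hb unfolding D_def by simp
      qed
    qed
  qed
  ultimately show ?case by blast
qed



lemma lin_sum:
  assumes lin: "real_linear_on S F" and z: "0 \<in> S" and add: "\<And>x y. x \<in> S \<Longrightarrow> y \<in> S \<Longrightarrow> x + y \<in> S"
    and fin: "finite K" and xs: "\<And>m. m \<in> K \<Longrightarrow> x m \<in> S"
  shows "F (\<Sum>m\<in>K. x m) = (\<Sum>m\<in>K. F (x m))"
proof -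
  have F0: "F 0 = 0"
  proof -
    have "F (const_poly 0 * 0) = const_poly 0 * F 0" using lin z unfolding real_linear_on_def by blast
    then show ?thesis by (simp add: const_poly_def)
  qed
  have "(\<Sum>m\<in>K. x m) \<in> S \<and> F (\<Sum>m\<in>K. x m) = (\<Sum>m\<in>K. F (x m))"
    using fin xs
  proof (induction K rule: finite_induct)
    case empty then show ?case using z F0 by simp
  next
    case (insert a K)
    then have xa: "x a \<in> S" and IH: "(\<Sum>m\<in>K. x m) \<in> S" "F (\<Sum>m\<in>K. x m) = (\<Sum>m\<in>K. F (x m))" by auto
    have "F (x a + (\<Sum>m\<in>K. x m)) = F (x a) + F (\<Sum>m\<in>K. x m)"
      using lin xa IH(1) unfolding real_linear_on_def by blast
    then show ?case using insert.hyps xa IH add by simp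
  qed
  then show ?thesis by blast
qed

lemma polyR_le_single: "g \<in> MS n k \<Longrightarrow> Poly_Mapping.single g c \<in> polyR_le n k"
  unfolding polyR_le_def using single_polyR[of g n k c] by (auto simp: MS_def)

lemma single_const: "Poly_Mapping.single m c = const_poly c * Poly_Mapping.single m 1"
  unfolding const_poly_def by (simp add: mult_single)

theorem mainTheorem2:
  fixes n k :: nat and A :: "rpoly \<Rightarrow> rpoly"
  assumes "real_linear_on (polyR_le n k) A"
    and "\<forall>p\<in>polyR_le n k. A p \<in> polyR n"
  shows "\<exists>D. is_diff n k D \<and> (\<forall>p\<in>polyR_le n k. D p = A p)"
proof -
  let ?M = "MS n k"
  let ?P = "\<lambda>\<beta> D. is_diff n k D \<and> (\<forall>g\<in>?M. D (Poly_Mapping.single g 1) = (if g = \<beta> then A (Poly_Mapping.single \<beta> 1) else 0))"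
  have ex: "\<exists>D. ?P \<beta> D" if b: "\<beta> \<in> ?M" for \<beta>
    using tri[OF b, of "A (Poly_Mapping.single \<beta> 1)"] assms(2) polyR_le_single[OF b] by blast
  define T where "T \<beta> = (SOME D. ?P \<beta> D)" for \<beta>
  have T: "?P \<beta> (T \<beta>)" if "\<beta> \<in> ?M" for \<beta>
    unfolding T_def by (rule someI_ex[of "?P \<beta>"]) (rule ex[OF that])
  define D where "D p = (\<Sum>\<beta>\<in>?M. T \<beta> p)" for p
  have dD: "is_diff n k D"
    unfolding D_def by (intro is_diff_sum finite_MS) (use T in blast)
  have Dsingle: "D (Poly_Mapping.single g 1) = A (Poly_Mapping.single g 1)" if g: "g \<in> ?M" for g
  proof -
    have "D (Poly_Mapping.single g 1) = (\<Sum>\<beta>\<in>?M. if g = \<beta> then A (Poly_Mapping.single \<beta> 1) else 0)"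
      unfolding D_def using T g by (intro sum.cong) auto
    also have "\<dots> = A (Poly_Mapping.single g 1)" using g finite_MS by simp
    finally show ?thesis .
  qed
  have linD: "real_linear_on (polyR n) D" using is_diff_mono_Suc[OF dD] by simp
  have "D p = A p" if p: "p \<in> polyR_le n k" for p
  proof -
    have keysM: "m \<in> ?M" if "m \<in> Poly_Mapping.keys p" for m
      using p that unfolding polyR_le_def polyR_def MS_def by auto
    have pe: "p = (\<Sum>m\<in>Poly_Mapping.keys p. const_poly (Poly_Mapping.lookup p m) * Poly_Mapping.single m 1)"
      using poly_expand[of p] by (simp flip: single_const)
    have "D p = (\<Sum>m\<in>Poly_Mapping.keys p. D (const_poly (Poly_Mapping.lookup p m) * Poly_Mapping.single m 1))"
      by (subst pe, rule lin_sum[OF linD polyR_zero polyR_add finite_keys])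
         (auto intro: polyR_mult polyR_const single_polyR keysM)
    also have "\<dots> = (\<Sum>m\<in>Poly_Mapping.keys p. const_poly (Poly_Mapping.lookup p m) * D (Poly_Mapping.single m 1))"
    proof (rule sum.cong[OF refl])
      fix m assume "m \<in> Poly_Mapping.keys p"
      then have "Poly_Mapping.single m 1 \<in> polyR n" using single_polyR keysM by blast
      then show "D (const_poly (Poly_Mapping.lookup p m) * Poly_Mapping.single m 1) = const_poly (Poly_Mapping.lookup p m) * D (Poly_Mapping.single m 1)"
        using linD unfolding real_linear_on_def by blast
    qed
    also have "\<dots> = (\<Sum>m\<in>Poly_Mapping.keys p. const_poly (Poly_Mapping.lookup p m) * A (Poly_Mapping.single m 1))"
      using Dsingle keysM by (intro sum.cong) auto
    also have "\<dots> = (\<Sum>m\<in>Poly_Mapping.keys p. A (const_poly (Poly_Mapping.lookup p m) * Poly_Mapping.single m 1))"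
      using assms(1) keysM polyR_le_single unfolding real_linear_on_def by (intro sum.cong) auto
    also have "\<dots> = A p"
    proof (subst (2) pe, rule lin_sum[symmetric, OF assms(1)])
      show "0 \<in> polyR_le n k" unfolding polyR_le_def by (simp add: polyR_zero)
      show "x + y \<in> polyR_le n k" if "x \<in> polyR_le n k" "y \<in> polyR_le n k" for x y
        using that keys_add[of x y] polyR_add[of x n y] unfolding polyR_le_def by blast
      show "finite (Poly_Mapping.keys p)" by simp
      show "const_poly (Poly_Mapping.lookup p m) * Poly_Mapping.single m 1 \<in> polyR_le n k"
        if "m \<in> Poly_Mapping.keys p" for m
        using polyR_le_single[OF keysM[OF that]] by (simp flip: single_const)
    qed
    finally show ?thesis .
  qed
  then show ?thesis using dD by blast
qed

end
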